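(* The alternating oriented matroid $C^{6,4}$ is not pure.
   Context: The alternating oriented matroid $C^{n,d}$ on $[n]$ has as circuits exactly the signed sets $(I^{odd},I^{even})$ and $(I^{even},I^{odd})$, where $I=\{i_1<\dots<i_{d+1}\}$ ranges over $(d+1)$-subsets of $[n]$, $I^{odd}=\{i_1,i_3,\dots\}$, $I^{even}=\{i_2,i_4,\dots\}$. Two subsets $I,J\subseteq[n]$ are separated if no circuit $X$ satisfies $X^+\subseteq I\setminus J$, $X^-\subseteq J\setminus I$; an oriented matroid is pure if every pairwise-separated collection of subsets that is maximal by inclusion has the maximum possible cardinality among pairwise-separated collections. *)

theory Defs
  imports Main
begin

text \<open>Odd-position and even-position elements of a finite set of naturals,
  listed in increasing order i_1 < i_2 < ... (positions counted from 1).\<close>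
definition odd_part :: "nat set \<Rightarrow> nat set" where
  "odd_part I = {sorted_list_of_set I ! k | k. k < card I \<and> even k}"

definition even_part :: "nat set \<Rightarrow> nat set" where
  "even_part I = {sorted_list_of_set I ! k | k. k < card I \<and> odd k}"

text \<open>Circuits (signed sets, pairs (X^+, X^-)) of the alternating oriented matroid C^{n,d} on [n].\<close>
definition alt_circuits :: "nat \<Rightarrow> nat \<Rightarrow> (nat set \<times> nat set) set" where
  "alt_circuits n d =
     (\<Union>I \<in> {I. I \<subseteq> {1..n} \<and> card I = d + 1}.
        {(odd_part I, even_part I), (even_part I, odd_part I)})"

definition separated :: "('a set \<times> 'a set) set \<Rightarrow> 'a set \<Rightarrow> 'a set \<Rightarrow> bool" where
  "separated C I J \<longleftrightarrow> \<not> (\<exists>X \<in> C. fst X \<subseteq> I - J \<and> snd X \<subseteq> J - I)"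

definition pairwise_separated :: "'a set \<Rightarrow> ('a set \<times> 'a set) set \<Rightarrow> 'a set set \<Rightarrow> bool" where
  "pairwise_separated E C F \<longleftrightarrow> F \<subseteq> Pow E \<and> (\<forall>I\<in>F. \<forall>J\<in>F. I \<noteq> J \<longrightarrow> separated C I J)"

definition maximal_separated :: "'a set \<Rightarrow> ('a set \<times> 'a set) set \<Rightarrow> 'a set set \<Rightarrow> bool" where
  "maximal_separated E C F \<longleftrightarrow> pairwise_separated E C F \<and>
     (\<forall>G. pairwise_separated E C G \<and> F \<subseteq> G \<longrightarrow> G = F)"

definition pure :: "'a set \<Rightarrow> ('a set \<times> 'a set) set \<Rightarrow> bool" where
  "pure E C \<longleftrightarrow> (\<forall>F. maximal_separated E C F \<longrightarrow>
      card F = Max {card G | G. pairwise_separated E C G})"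

end

theory Submission
  imports Defs
begin

lemma L5: "{xs ! k | k. k < Suc (Suc (Suc (Suc (Suc 0)))) \<and> P k} = (if P 0 then {xs!0} else {}) \<union> (if P 1 then {xs!1} else {}) \<union> (if P 2 then {xs!2} else {}) \<union> (if P 3 then {xs!3} else {}) \<union> (if P 4 then {xs!4} else {})"
proof -
  have "{xs ! k | k. k < Suc (Suc (Suc (Suc (Suc 0)))) \<and> P k} = (\<lambda>k. xs!k) ` {k \<in> {0,1,2,3,4}. P k}"
    by (auto simp: less_Suc_eq)
  then show ?thesis by (auto split: if_splits)
qed

lemma idx5: "{I. I \<subseteq> {1..6::nat} \<and> card I = 5} = {{2,3,4,5,6}, {1,3,4,5,6}, {1,2,4,5,6}, {1,2,3,5,6}, {1,2,3,4,6}, {1,2,3,4,5}}"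
proof
  show "{{2,3,4,5,6}, {1,3,4,5,6}, {1,2,4,5,6}, {1,2,3,5,6}, {1,2,3,4,6}, {1,2,3,4,5}} \<subseteq> {I. I \<subseteq> {1..6::nat} \<and> card I = 5}" by auto
next
  show "{I. I \<subseteq> {1..6::nat} \<and> card I = 5} \<subseteq> {{2,3,4,5,6}, {1,3,4,5,6}, {1,2,4,5,6}, {1,2,3,5,6}, {1,2,3,4,6}, {1,2,3,4,5}}"
  proof
    fix I assume "I \<in> {I. I \<subseteq> {1..6::nat} \<and> card I = 5}"
    then have sub: "I \<subseteq> {1..6}" and c: "card I = 5" by auto
    have "card ({1..6::nat} - I) = 1" using sub c by (simp add: card_Diff_subset finite_subset)
    then obtain k where k: "{1..6::nat} - I = {k}" by (meson card_1_singletonE)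
    then have kin: "k \<in> {1..6}" by auto
    have Ieq: "I = {1..6} - {k}" using k sub by auto
    have "k = 1 \<or> k = 2 \<or> k = 3 \<or> k = 4 \<or> k = 5 \<or> k = 6" using kin by auto
    moreover have "{1..6::nat} - {1} = {2,3,4,5,6}" "{1..6::nat} - {2} = {1,3,4,5,6}" "{1..6::nat} - {3} = {1,2,4,5,6}"
      "{1..6::nat} - {4} = {1,2,3,5,6}" "{1..6::nat} - {5} = {1,2,3,4,6}" "{1..6::nat} - {6} = {1,2,3,4,5}" by auto
    ultimately show "I \<in> {{2,3,4,5,6}, {1,3,4,5,6}, {1,2,4,5,6}, {1,2,3,5,6}, {1,2,3,4,6}, {1,2,3,4,5}}" unfolding Ieq by (elim disjE) simp_all
  qed
qed

definition Cx :: "(nat set \<times> nat set) set" where "Cx = {({1,3,5}, {2,4}), ({2,4}, {1,3,5}), ({1,3,6}, {2,4}), ({2,4}, {1,3,6}), ({1,3,6}, {2,5}), ({2,5}, {1,3,6}), ({1,4,6}, {2,5}), ({2,5}, {1,4,6}), ({1,4,6}, {3,5}), ({3,5}, {1,4,6}), ({2,4,6}, {3,5}), ({3,5}, {2,4,6})}"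

lemma op0: "odd_part {2,3,4,5,6} = {2,4,6}" unfolding odd_part_def by (auto simp: L5)
lemma ep0: "even_part {2,3,4,5,6} = {3,5}" unfolding even_part_def by (auto simp: L5)
lemma op1: "odd_part {1,3,4,5,6} = {1,4,6}" unfolding odd_part_def by (auto simp: L5)
lemma ep1: "even_part {1,3,4,5,6} = {3,5}" unfolding even_part_def by (auto simp: L5)
lemma op2: "odd_part {1,2,4,5,6} = {1,4,6}" unfolding odd_part_def by (auto simp: L5)
lemma ep2: "even_part {1,2,4,5,6} = {2,5}" unfolding even_part_def by (auto simp: L5)
lemma op3: "odd_part {1,2,3,5,6} = {1,3,6}" unfolding odd_part_def by (auto simp: L5)
lemma ep3: "even_part {1,2,3,5,6} = {2,5}" unfolding even_part_def by (auto simp: L5)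
lemma op4: "odd_part {1,2,3,4,6} = {1,3,6}" unfolding odd_part_def by (auto simp: L5)
lemma ep4: "even_part {1,2,3,4,6} = {2,4}" unfolding even_part_def by (auto simp: L5)
lemma op5: "odd_part {1,2,3,4,5} = {1,3,5}" unfolding odd_part_def by (auto simp: L5)
lemma ep5: "even_part {1,2,3,4,5} = {2,4}" unfolding even_part_def by (auto simp: L5)

lemma circ: "alt_circuits 6 4 = Cx"
proof -
  have e: "(4::nat)+1 = 5" by simp
  show ?thesis
  unfolding alt_circuits_def Cx_def e idx5 UN_insert UN_empty op0 ep0 op1 ep1 op2 ep2 op3 ep3 op4 ep4 op5 ep5
  apply simp
  done
qed

definition Fl :: "nat set list" where "Fl = [{}, {1}, {2}, {3}, {4}, {5}, {6}, {2,1}, {3,1}, {4,1}, {5,1}, {6,1}, {3,2}, {4,2}, {6,2}, {4,3}, {5,3}, {6,3}, {5,4}, {6,4}, {6,5}, {3,2,1}, {4,2,1}, {5,2,1}, {6,2,1}, {4,3,1}, {5,4,1}, {6,5,1}, {4,3,2}, {6,3,2}, {6,5,2}, {5,4,3}, {6,4,3}, {6,5,3}, {6,5,4}, {4,3,2,1}, {5,3,2,1}, {6,3,2,1}, {5,4,2,1}, {6,5,2,1}, {5,4,3,1}, {6,4,3,1}, {6,5,4,1}, {5,4,3,2}, {6,4,3,2}, {6,5,3,2}, {6,5,4,2}, {6,5,4,3}, {5,4,3,2,1}, {6,4,3,2,1}, {6,5,3,2,1}, {6,5,4,2,1}, {6,5,4,3,1}, {6,5,4,3,2}, {6,5,4,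3,2,1}]"
definition Gl :: "nat set list" where "Gl = [{}, {1}, {2}, {3}, {4}, {5}, {6}, {1,2}, {1,3}, {1,4}, {1,5}, {1,6}, {2,3}, {2,5}, {2,6}, {3,4}, {3,5}, {3,6}, {4,5}, {4,6}, {5,6}, {1,2,3}, {1,2,4}, {1,2,5}, {1,2,6}, {1,3,4}, {1,3,5}, {1,4,5}, {1,5,6}, {2,3,4}, {2,3,5}, {2,3,6}, {2,4,5}, {2,5,6}, {3,4,5}, {3,4,6}, {3,5,6}, {4,5,6}, {1,2,3,4}, {1,2,3,5}, {1,2,3,6}, {1,2,4,5}, {1,2,5,6}, {1,3,4,5}, {1,4,5,6}, {2,3,4,5}, {2,3,4,6}, {2,3,5,6}, {2,4,5,6}, {3,4,5,6}, {1,2,3,4,5}, {1,2,3,4,6}, {1,2,3,5,6}, {1,2,4,5,6}, {1,3,4,5,6}, {2,3,4,5,6}, {1,2,3,4,5,6}]"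

lemma sepF: "\<forall>I\<in>set Fl. \<forall>J\<in>set Fl. separated Cx I J"
  by (simp add: Fl_def Cx_def separated_def)

lemma sepG: "\<forall>I\<in>set Gl. \<forall>J\<in>set Gl. separated Cx I J"
  by (simp add: Gl_def Cx_def separated_def)


definition mk :: "bool \<Rightarrow> bool \<Rightarrow> bool \<Rightarrow> bool \<Rightarrow> bool \<Rightarrow> bool \<Rightarrow> nat set" where
  "mk b1 b2 b3 b4 b5 b6 = (if b1 then {1} else {}) \<union> ((if b2 then {2} else {}) \<union> ((if b3 then {3} else {})
     \<union> ((if b4 then {4} else {}) \<union> ((if b5 then {5} else {}) \<union> (if b6 then {6} else {})))))"

lemma mk_mem: "x \<in> mk b1 b2 b3 b4 b5 b6 \<longleftrightarrow> (x=1 \<and> b1) \<or> (x=2 \<and> b2) \<or> (x=3 \<and> b3) \<or> (x=4 \<and> b4) \<or> (x=5 \<and> b5) \<or> (x=6 \<and> b6)"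
  by (simp add: mk_def)

lemma mk_eq: assumes "S \<subseteq> {1..6::nat}" shows "S = mk (1\<in>S) (2\<in>S) (3\<in>S) (4\<in>S) (5\<in>S) (6\<in>S)"
proof (rule set_eqI)
  fix x
  have h: "x \<in> S \<Longrightarrow> x = 1 \<or> x = 2 \<or> x = 3 \<or> x = 4 \<or> x = 5 \<or> x = 6" using assms by auto
  show "x \<in> S \<longleftrightarrow> x \<in> mk (1\<in>S) (2\<in>S) (3\<in>S) (4\<in>S) (5\<in>S) (6\<in>S)"
    unfolding mk_mem using h by blast
qed

lemma mk_max: "\<forall>f\<in>set Fl. separated Cx (mk b1 b2 b3 b4 b5 b6) f \<Longrightarrow> mk b1 b2 b3 b4 b5 b6 \<in> set Fl"
  by (cases b1; cases b2; cases b3; cases b4; cases b5; cases b6; simp add: mk_def Fl_def Cx_def separated_def)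

lemma mk_max': assumes "S \<subseteq> {1..6::nat}" "\<forall>f\<in>set Fl. separated Cx S f" shows "S \<in> set Fl"
proof -
  have "mk (1\<in>S) (2\<in>S) (3\<in>S) (4\<in>S) (5\<in>S) (6\<in>S) \<in> set Fl"
    apply (rule mk_max) using assms(2) by (simp only: mk_eq[OF assms(1), symmetric])
  then show ?thesis by (simp only: mk_eq[OF assms(1), symmetric])
qed

definition code :: "nat set \<Rightarrow> nat" where "code S = (\<Sum>x\<in>S. 2^x)"

lemma cardG: "card (code ` set Gl) = 57"
  by (simp add: Gl_def code_def)

lemma subF: "set Fl \<subseteq> Pow {1..6}" by (simp add: Fl_def)
lemma subG: "set Gl \<subseteq> Pow {1..6}" by (simp add: Gl_def)

lemma lenF: "length Fl = 55" by (simp add: Fl_def)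

theorem lemma11p2:
  shows "\<not> pure {1..6::nat} (alt_circuits 6 4)"
proof
  assume P: "pure {1..6::nat} (alt_circuits 6 4)"
  let ?E = "{1..6::nat}"
  have PwF: "pairwise_separated ?E Cx (set Fl)"
    using sepF subF unfolding pairwise_separated_def by blast
  have PwG: "pairwise_separated ?E Cx (set Gl)"
    using sepG subG unfolding pairwise_separated_def by blast
  have MF: "maximal_separated ?E Cx (set Fl)"
    unfolding maximal_separated_def
  proof (intro conjI allI impI PwF)
    fix G assume a: "pairwise_separated ?E Cx G \<and> set Fl \<subseteq> G"
    show "G = set Fl"
    proof
      show "G \<subseteq> set Fl"
      proof
        fix S assume S: "S \<in> G"
        show "S \<in> set Fl"
        proof (cases "S \<in> set Fl")
          case True then show ?thesis .
        next
          case False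
          have sub: "S \<subseteq> ?E" using a S unfolding pairwise_separated_def by auto
          have "\<forall>f\<in>set Fl. separated Cx S f"
          proof
            fix f assume f: "f \<in> set Fl"
            have fG: "f \<in> G" using a f by (meson subsetD)
            have ne: "S \<noteq> f" using False f by metis
            have "\<forall>I\<in>G. \<forall>J\<in>G. I \<noteq> J \<longrightarrow> separated Cx I J"
              using a unfolding pairwise_separated_def by (meson conjunct1 conjunct2)
            then show "separated Cx S f" using S fG ne by (meson)
          qed
          then show ?thesis using mk_max' sub by blast
        qed
      qed
    qed (use a in auto)
  qed
  have cF: "card (set Fl) \<le> 55"
    using card_length[of Fl] lenF by simp
  have cG: "57 \<le> card (set Gl)"
    using card_image_le[of "set Gl" code] cardG by simp
  define CS where "CS = {card G | G. pairwise_separated ?E Cx G}"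
  have fin: "finite CS"
  proof (rule finite_subset)
    show "CS \<subseteq> {..card (Pow ?E)}"
      unfolding CS_def pairwise_separated_def by (auto intro!: card_mono)
  qed simp
  have "card (set Gl) \<in> CS" using PwG unfolding CS_def by blast
  then have "card (set Gl) \<le> Max CS" using fin by simp
  moreover have "card (set Fl) = Max CS"
    using P MF unfolding pure_def CS_def circ by blast
  ultimately show False using cF cG by simp
qed

end
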